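(* Let $N, K \geq 2$ be integers, let $N_0>0$, $P>0$, $T>0$, and fix an index $i \in \{1,\ldots,K\}$. Let $\mathbf{s}_k \in \mathbb{C}^N$ for $k \neq i$ be given and fixed, and consider $$\operatorname{SINR}(\mathbf{s}_i)_i = \left\{ \frac{1}{6N^2}\sum_{k=1, k\neq i}^K \sum_{m=1}^N S_m^{i,k} + \frac{N_0}{2PT}\right\}^{-1/2}$$ as a function of $\mathbf{s}_i \in \mathbb{C}^N$ subject to $\|\mathbf{s}_i\|^2 = N$. Let $\lambda^{(i)}_{\min}\ (\geq 0)$ be the minimum eigenvalue of the positive semidefinite Hermitian matrix $$\Sigma_i = \sum_{k=1, k \neq i}^K \sum_{m=1}^N \left[(\mathbf{s}_k^* Q_m \mathbf{s}_k) Q_m + (\mathbf{s}_k^* \hat{Q}_m \mathbf{s}_k)\hat{Q}_m\right],$$ and let $\mathbf{u}_i$ be a corresponding eigenvector with $\|\mathbf{u}_i\|=1$. Then $\mathbf{s}_i^\star = \sqrt{N}\,\mathbf{u}_i$ maximizes $\operatorname{SINR}(\mathbf{s}_i)_i$ over all $\mathbf{s}_i\in\mathbb{C}^N$ with $\|\mathbf{s}_i\|^2=N$, and the maximum value is $$\operatorname{SINR}_i^\star = \operatorname{SINR}(\mathbf{s}_i^\star)_i = \left\{\frac{\lambda^{(i)}_{\min}}{6N} + \frac{N_0}{2PT}\right\}^{-1/2}.$$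
   Context: Indices run over $1,\ldots,N$; $j$ is the imaginary unit and $\mathbf{z}^*$ denotes conjugate transpose. $V$ and $\hat V$ are the $N\times N$ unitary matrices with entries $V_{m,n} = \frac{1}{\sqrt N}\exp(-2\pi j \frac{mn}{N})$ and $\hat V_{m,n} = \frac{1}{\sqrt N}\exp\!\left(-2\pi j n(\frac{m}{N} + \frac{1}{2N})\right)$. For $m=1,\ldots,N$, $C_m$ (resp. $\hat C_m$) is the $N\times N$ diagonal matrix whose only nonzero entry is the $(m,m)$ entry, equal to $\sqrt{1+\frac12\cos(2\pi \frac mN)}$ (resp. $\sqrt{1+\frac12\cos(2\pi(\frac mN+\frac1{2N}))}$). Set $Q_m = V^* C_m V$ and $\hat Q_m = \hat V^* \hat C_m \hat V$. For sequences $\mathbf{s}_i,\mathbf{s}_k\in\mathbb{C}^N$, $S_m^{i,k} = (\mathbf{s}_i^* Q_m \mathbf{s}_i)(\mathbf{s}_k^* Q_m \mathbf{s}_k) + (\mathbf{s}_i^* \hat Q_m \mathbf{s}_i)(\mathbf{s}_k^* \hat Q_m \mathbf{s}_k)$. (This SINR models user $i$ of a $K$-user asynchronous BPSK CDMA system with spreading sequences $\mathbf{s}_k$ of length $N$, signal power $P$, symbol duration $T$ and noise spectral density $N_0/2$.) *)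

theory Defs
  imports Complex_Main
begin

text \<open>Vectors in C^N are functions nat => complex, indexed by 1..N;
  N x N matrices are functions nat => nat => complex, indexed by 1..N.\<close>

definition mmult :: "nat \<Rightarrow> (nat \<Rightarrow> nat \<Rightarrow> complex) \<Rightarrow> (nat \<Rightarrow> nat \<Rightarrow> complex) \<Rightarrow> nat \<Rightarrow> nat \<Rightarrow> complex" where
  "mmult N A B = (\<lambda>a b. \<Sum>c\<in>{1..N}. A a c * B c b)"

definition adj :: "(nat \<Rightarrow> nat \<Rightarrow> complex) \<Rightarrow> nat \<Rightarrow> nat \<Rightarrow> complex" where
  "adj A = (\<lambda>a b. cnj (A b a))"

definition Vmat :: "nat \<Rightarrow> nat \<Rightarrow> nat \<Rightarrow> complex" where
  "Vmat N = (\<lambda>m n. complex_of_real (1 / sqrt (real N)) *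
      exp (- 2 * pi * \<i> * of_real (real m * real n / real N)))"

definition Vhat :: "nat \<Rightarrow> nat \<Rightarrow> nat \<Rightarrow> complex" where
  "Vhat N = (\<lambda>m n. complex_of_real (1 / sqrt (real N)) *
      exp (- 2 * pi * \<i> * of_real (real n * (real m / real N + 1 / (2 * real N)))))"

definition Cmat :: "nat \<Rightarrow> nat \<Rightarrow> nat \<Rightarrow> nat \<Rightarrow> complex" where
  "Cmat N m = (\<lambda>a b. if a = m \<and> b = m
      then complex_of_real (sqrt (1 + 1/2 * cos (2 * pi * real m / real N))) else 0)"

definition Chat :: "nat \<Rightarrow> nat \<Rightarrow> nat \<Rightarrow> nat \<Rightarrow> complex" where
  "Chat N m = (\<lambda>a b. if a = m \<and> b = m
      then complex_of_real (sqrt (1 + 1/2 * cos (2 * pi * (real m / real N + 1 / (2 * real N))))) else 0)"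

definition Qmat :: "nat \<Rightarrow> nat \<Rightarrow> nat \<Rightarrow> nat \<Rightarrow> complex" where
  "Qmat N m = mmult N (adj (Vmat N)) (mmult N (Cmat N m) (Vmat N))"

definition Qhat :: "nat \<Rightarrow> nat \<Rightarrow> nat \<Rightarrow> nat \<Rightarrow> complex" where
  "Qhat N m = mmult N (adj (Vhat N)) (mmult N (Chat N m) (Vhat N))"

definition qform :: "nat \<Rightarrow> (nat \<Rightarrow> nat \<Rightarrow> complex) \<Rightarrow> (nat \<Rightarrow> complex) \<Rightarrow> complex" where
  "qform N A x = (\<Sum>a\<in>{1..N}. \<Sum>b\<in>{1..N}. cnj (x a) * A a b * x b)"

definition sqnorm :: "nat \<Rightarrow> (nat \<Rightarrow> complex) \<Rightarrow> real" where
  "sqnorm N x = (\<Sum>a\<in>{1..N}. (cmod (x a))\<^sup>2)"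

text \<open>S_m^{i,k} for sequences x = s_i and y = s_k.\<close>
definition Sterm :: "nat \<Rightarrow> nat \<Rightarrow> (nat \<Rightarrow> complex) \<Rightarrow> (nat \<Rightarrow> complex) \<Rightarrow> complex" where
  "Sterm N m x y = qform N (Qmat N m) x * qform N (Qmat N m) y
                 + qform N (Qhat N m) x * qform N (Qhat N m) y"

text \<open>SINR of user i; s k is the spreading sequence of user k. The bracketed quantity
  is real (quadratic forms of Hermitian matrices); we take its real part.\<close>
definition SINR :: "nat \<Rightarrow> nat \<Rightarrow> real \<Rightarrow> real \<Rightarrow> real \<Rightarrow> (nat \<Rightarrow> nat \<Rightarrow> complex) \<Rightarrow> nat \<Rightarrow> real" where
  "SINR N K N0 P T s i =
     (Re (\<Sum>k\<in>{1..K} - {i}. \<Sum>m\<in>{1..N}. Sterm N m (s i) (s k)) / (6 * (real N)\<^sup>2)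
      + N0 / (2 * P * T)) powr (-1/2)"

definition Sigma :: "nat \<Rightarrow> nat \<Rightarrow> (nat \<Rightarrow> nat \<Rightarrow> complex) \<Rightarrow> nat \<Rightarrow> nat \<Rightarrow> nat \<Rightarrow> complex" where
  "Sigma N K s i = (\<lambda>a b. \<Sum>k\<in>{1..K} - {i}. \<Sum>m\<in>{1..N}.
      qform N (Qmat N m) (s k) * Qmat N m a b + qform N (Qhat N m) (s k) * Qhat N m a b)"

definition is_eigvec :: "nat \<Rightarrow> (nat \<Rightarrow> nat \<Rightarrow> complex) \<Rightarrow> (nat \<Rightarrow> complex) \<Rightarrow> complex \<Rightarrow> bool" where
  "is_eigvec N A v \<mu> \<longleftrightarrow> (\<exists>a\<in>{1..N}. v a \<noteq> 0) \<and>
      (\<forall>a\<in>{1..N}. (\<Sum>b\<in>{1..N}. A a b * v b) = \<mu> * v a)"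

definition is_eigval :: "nat \<Rightarrow> (nat \<Rightarrow> nat \<Rightarrow> complex) \<Rightarrow> complex \<Rightarrow> bool" where
  "is_eigval N A \<mu> \<longleftrightarrow> (\<exists>v. is_eigvec N A v \<mu>)"

text \<open>Minimum eigenvalue of a Hermitian matrix (all eigenvalues are real).\<close>
definition is_min_eigval :: "nat \<Rightarrow> (nat \<Rightarrow> nat \<Rightarrow> complex) \<Rightarrow> real \<Rightarrow> bool" where
  "is_min_eigval N A lam \<longleftrightarrow> is_eigval N A (complex_of_real lam) \<and>
      (\<forall>\<mu>. is_eigval N A \<mu> \<longrightarrow> lam \<le> Re \<mu>)"

end

theory Submission
  imports Defs "HOL-Analysis.Analysis"
begin


definition mv :: "nat \<Rightarrow> (nat \<Rightarrow> nat \<Rightarrow> complex) \<Rightarrow> (nat \<Rightarrow> complex) \<Rightarrow> nat \<Rightarrow> complex" where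
  "mv N A x = (\<lambda>a. \<Sum>b\<in>{1..N}. A a b * x b)"

definition herm :: "nat \<Rightarrow> (nat \<Rightarrow> nat \<Rightarrow> complex) \<Rightarrow> bool" where
  "herm N A \<longleftrightarrow> (\<forall>a\<in>{1..N}. \<forall>b\<in>{1..N}. A a b = cnj (A b a))"

lemma qform_mv: "qform N A x = (\<Sum>a\<in>{1..N}. cnj (x a) * mv N A x a)"
  by (simp add: qform_def mv_def sum_distrib_left mult.assoc)

lemma herm_cnj: "herm N A \<Longrightarrow> a \<in> {1..N} \<Longrightarrow> b \<in> {1..N} \<Longrightarrow> cnj (A a b) = A b a"
  unfolding herm_def by (metis complex_cnj_cnj)

lemma qform_real: assumes "herm N A" shows "cnj (qform N A x) = qform N A x"
proof -
  have "cnj (qform N A x) = (\<Sum>a\<in>{1..N}. \<Sum>b\<in>{1..N}. x a * A b a * cnj (x b))"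
    unfolding qform_def cnj_sum
    by (intro sum.cong refl) (simp add: herm_cnj[OF assms])
  also have "\<dots> = (\<Sum>b\<in>{1..N}. \<Sum>a\<in>{1..N}. x a * A b a * cnj (x b))"
    by (rule sum.swap)
  also have "\<dots> = qform N A x" unfolding qform_def
    by (intro sum.cong refl) (simp only: mult.commute mult.left_commute)
  finally show ?thesis .
qed

lemma qform_Re: assumes "herm N A" shows "qform N A x = complex_of_real (Re (qform N A x))"
  using qform_real[OF assms, of x] by (simp add: complex_eq_iff)

lemma inner_herm: assumes "herm N A"
  shows "(\<Sum>a\<in>{1..N}. cnj (x a) * mv N A w a) = cnj (\<Sum>a\<in>{1..N}. cnj (w a) * mv N A x a)"
proof -
  have "cnj (\<Sum>a\<in>{1..N}. cnj (w a) * mv N A x a) = (\<Sum>a\<in>{1..N}. \<Sum>b\<in>{1..N}. w a * A b a * cnj (x b))"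
    unfolding mv_def cnj_sum sum_distrib_left
    by (intro sum.cong refl) (simp add: herm_cnj[OF assms] mult.assoc)
  also have "\<dots> = (\<Sum>b\<in>{1..N}. \<Sum>a\<in>{1..N}. w a * A b a * cnj (x b))"
    by (rule sum.swap)
  also have "\<dots> = (\<Sum>a\<in>{1..N}. cnj (x a) * mv N A w a)" unfolding mv_def sum_distrib_left
    by (intro sum.cong refl) (simp only: mult.commute mult.left_commute)
  finally show ?thesis by simp
qed

lemma qform_expand:
  "qform N A (\<lambda>a. x a + complex_of_real t * w a) = qform N A x
     + complex_of_real t * (\<Sum>a\<in>{1..N}. cnj (x a) * mv N A w a)
     + complex_of_real t * (\<Sum>a\<in>{1..N}. cnj (w a) * mv N A x a)
     + complex_of_real (t^2) * qform N A w"
proof -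
  have pt: "cnj (x a + complex_of_real t * w a) * A a b * (x b + complex_of_real t * w b)
     = cnj (x a) * A a b * x b + complex_of_real t * (cnj (x a) * (A a b * w b))
       + complex_of_real t * (cnj (w a) * (A a b * x b)) + complex_of_real (t^2) * (cnj (w a) * A a b * w b)" for a b
    by (simp add: algebra_simps power2_eq_square)
  show ?thesis unfolding qform_def mv_def pt
    by (simp only: sum.distrib sum_distrib_left)
qed

lemma qform_scale: "qform N A (\<lambda>a. c * y a) = cnj c * c * qform N A y"
proof -
  have "cnj (c * y a) * A a b * (c * y b) = cnj c * c * (cnj (y a) * A a b * y b)" for a b
    by (simp add: algebra_simps)
  then show ?thesis unfolding qform_def by (simp only: sum_distrib_left)
qed

lemma sqnorm_scale: "sqnorm N (\<lambda>a. c * y a) = (cmod c)^2 * sqnorm N y"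
proof -
  have "(cmod (c * y a))^2 = (cmod c)^2 * (cmod (y a))^2" for a
    by (simp add: norm_mult power_mult_distrib)
  then show ?thesis unfolding sqnorm_def by (simp only: sum_distrib_left)
qed

lemma Re_cnj_sum: "Re (\<Sum>a\<in>{1..N}. cnj (w a) * w a) = sqnorm N w"
proof -
  have h: "Re (cnj z * z) = (cmod z)^2" for z :: complex
    using complex_norm_square[of z] by (metis Re_complex_of_real mult.commute)
  show ?thesis unfolding sqnorm_def Re_sum by (rule sum.cong) (simp_all only: h)
qed


lemma psd_kernel:
  assumes herm: "herm N A" and psd: "\<And>y. 0 \<le> Re (qform N A y)" and z: "Re (qform N A x) = 0"
    and a: "a \<in> {1..N}"
  shows "mv N A x a = 0"
proof -
  define w where "w = mv N A x"
  define W where "W = sqnorm N w"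
  define c where "c = Re (qform N A w)"
  have W0: "W \<ge> 0" unfolding W_def sqnorm_def by (simp add: sum_nonneg)
  have key: "0 \<le> 2*t*W + t^2 * c" for t
  proof -
    have h1: "Re (\<Sum>a\<in>{1..N}. cnj (w a) * mv N A x a) = W"
      unfolding W_def w_def[symmetric] by (rule Re_cnj_sum)
    have h2: "Re (\<Sum>a\<in>{1..N}. cnj (x a) * mv N A w a) = W"
      using h1 inner_herm[OF herm, of x w] by simp
    have "0 \<le> Re (qform N A (\<lambda>a. x a + complex_of_real t * w a))" by (rule psd)
    also have "\<dots> = Re (qform N A x) + t * Re (\<Sum>a\<in>{1..N}. cnj (x a) * mv N A w a)
        + t * Re (\<Sum>a\<in>{1..N}. cnj (w a) * mv N A x a) + t^2 * c"
      unfolding qform_expand c_def by simp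
    also have "\<dots> = 2*t*W + t^2 * c" using h1 h2 z by simp
    finally show ?thesis .
  qed
  define d where "d = \<bar>c\<bar> + 1"
  have d0: "d > 0" unfolding d_def by simp
  have "2*(-W/d)*W + (-W/d)^2 * c = W^2 * (c - 2*d) / d^2"
    using d0 by (simp add: field_simps power2_eq_square)
  with key[of "-W/d"] have "0 \<le> W^2 * (c - 2*d) / d^2" by simp
  then have "0 \<le> W^2 * (c - 2*d)" using d0 by (simp add: zero_le_divide_iff)
  moreover have "c - 2*d < 0" unfolding d_def by (cases "0 \<le> c") auto
  ultimately have "W^2 \<le> 0" by (simp add: zero_le_mult_iff)
  then have "W = 0" by simp
  then have "(cmod (w a))^2 = 0" unfolding W_def sqnorm_def
    using sum_nonneg_eq_0_iff[of "{1..N}" "\<lambda>a. (cmod (w a))^2"] a by simp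
  then show ?thesis unfolding w_def by simp
qed

lemma coord_cont [continuous_intros]: "continuous_on S (\<lambda>x::'a\<Rightarrow>'b::topological_space. x i)"
  by (rule continuous_on_subset[OF continuous_on_product_coordinates]) simp

lemma exists_min:
  assumes N: "N \<ge> 1"
  shows "\<exists>x0. sqnorm N x0 = 1 \<and> (\<forall>y. sqnorm N y = 1 \<longrightarrow> Re (qform N A x0) \<le> Re (qform N A y))"
proof -
  define T where "T a = (if a \<in> {1..N} then cball (0::complex) 1 else {0})" for a
  define S where "S = Pi UNIV T \<inter> {x. sqnorm N x = 1}"
  have "compactin (product_topology (\<lambda>_. euclidean) UNIV) (PiE UNIV T)"
    by (subst compactin_PiE) (auto simp: T_def)
  then have cT: "compact (Pi UNIV T)"
    by (simp add: euclidean_product_topology PiE_UNIV_domain)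
  have cs: "continuous_on UNIV (\<lambda>x. sqnorm N x)" unfolding sqnorm_def
    by (intro continuous_intros)
  have "closed {x. sqnorm N x = 1}"
    by (rule closed_Collect_eq[OF cs]) (rule continuous_on_const)
  with cT have cS: "compact S" unfolding S_def by (rule compact_Int_closed)
  define e where "e = (\<lambda>a::nat. if a = 1 then (1::complex) else 0)"
  have "sqnorm N e = (\<Sum>a\<in>{1..N}. if a = 1 then 1 else 0)"
    unfolding sqnorm_def e_def by (intro sum.cong refl) simp
  also have "\<dots> = 1" using N by simp
  finally have "e \<in> S" unfolding S_def T_def e_def using N by auto
  then have ne: "S \<noteq> {}" by auto
  have cq: "continuous_on S (\<lambda>x. Re (qform N A x))" unfolding qform_def
    by (intro continuous_intros)
  obtain x0 where x0: "x0 \<in> S" and mn: "\<And>y. y \<in> S \<Longrightarrow> Re (qform N A x0) \<le> Re (qform N A y)"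
    using continuous_attains_inf[OF cS ne cq] by blast
  show ?thesis
  proof (intro exI conjI allI impI)
    show "sqnorm N x0 = 1" using x0 unfolding S_def by simp
    fix y assume y: "sqnorm N y = 1"
    define y' where "y' = (\<lambda>a. if a \<in> {1..N} then y a else 0)"
    have sq': "sqnorm N y' = sqnorm N y" unfolding sqnorm_def y'_def by (intro sum.cong refl) simp
    have q': "qform N A y' = qform N A y" unfolding qform_def y'_def by (intro sum.cong refl) simp
    have "cmod (y a) \<le> 1" if "a \<in> {1..N}" for a
    proof -
      have "(cmod (y a))^2 \<le> sqnorm N y" unfolding sqnorm_def
        by (rule member_le_sum) (use that in auto)
      then show ?thesis using y power_le_one_iff[of "cmod (y a)" 2] by simp
    qed
    then have "y' \<in> S" unfolding S_def T_def y'_def using sq' y by (auto simp: y'_def)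
    from mn[OF this] show "Re (qform N A x0) \<le> Re (qform N A y)" using q' by simp
  qed
qed


lemma sum_delta_mult: fixes f g :: "nat \<Rightarrow> complex" shows "a \<in> {1..N} \<Longrightarrow>
  (\<Sum>b\<in>{1..N}. f b * (if a = b then m else 0) * g b) = f a * m * g a"
proof -
  assume a: "a \<in> {1..N}"
  have "(\<Sum>b\<in>{1..N}. f b * (if a = b then m else 0) * g b) = (\<Sum>b\<in>{1..N}. if a = b then f a * m * g a else 0)"
    by (intro sum.cong refl) auto
  then show ?thesis using a by simp
qed

lemma sum_delta_mult2: fixes g :: "nat \<Rightarrow> complex" shows "a \<in> {1..N} \<Longrightarrow>
  (\<Sum>b\<in>{1..N}. (if a = b then m else 0) * g b) = m * g a"
proof -
  assume a: "a \<in> {1..N}"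
  have "(\<Sum>b\<in>{1..N}. (if a = b then m else 0) * g b) = (\<Sum>b\<in>{1..N}. if a = b then m * g a else 0)"
    by (intro sum.cong refl) auto
  then show ?thesis using a by simp
qed

lemma rayleigh:
  assumes herm: "herm N A" and N: "N \<ge> 1"
  shows "\<exists>\<mu> x0. is_eigvec N A x0 (complex_of_real \<mu>) \<and> (\<forall>y. \<mu> * sqnorm N y \<le> Re (qform N A y))"
proof -
  obtain x0 where x0: "sqnorm N x0 = 1"
    and mn: "\<And>y. sqnorm N y = 1 \<Longrightarrow> Re (qform N A x0) \<le> Re (qform N A y)"
    using exists_min[OF N, of A] by blast
  define \<mu> where "\<mu> = Re (qform N A x0)"
  have ray: "\<mu> * sqnorm N y \<le> Re (qform N A y)" for y
  proof (cases "sqnorm N y = 0")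
    case True
    then have "\<forall>a\<in>{1..N}. (cmod (y a))^2 = 0" unfolding sqnorm_def
      by (subst (asm) sum_nonneg_eq_0_iff) auto
    then have "\<forall>a\<in>{1..N}. y a = 0" by simp
    then have "qform N A y = 0" unfolding qform_def by simp
    then show ?thesis using True by simp
  next
    case False
    define s where "s = sqnorm N y"
    have s0: "s > 0" using False unfolding s_def sqnorm_def
      by (metis (no_types, lifting) order_le_less sum_nonneg zero_le_power2)
    define c where "c = complex_of_real (1 / sqrt s)"
    have "sqnorm N (\<lambda>a. c * y a) = (1 / sqrt s)^2 * s"
      using s0 unfolding sqnorm_scale c_def s_def by (simp add: norm_divide)
    also have "\<dots> = 1" using s0 by (simp add: power_divide)
    finally have "\<mu> \<le> Re (qform N A (\<lambda>a. c * y a))" unfolding \<mu>_def by (rule mn)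
    also have "qform N A (\<lambda>a. c * y a) = complex_of_real (1 / s) * qform N A y"
    proof -
      have "cnj c * c = complex_of_real ((1/sqrt s) * (1/sqrt s))" unfolding c_def
        by (simp only: complex_cnj_complex_of_real of_real_mult)
      also have "(1/sqrt s) * (1/sqrt s) = 1 / (sqrt s * sqrt s)"
        by (simp only: times_divide_times_eq mult_1)
      also have "sqrt s * sqrt s = s" using s0 by simp
      finally have cc: "cnj c * c = complex_of_real (1 / s)" .
      show ?thesis unfolding qform_scale cc ..
    qed
    also have "Re \<dots> = Re (qform N A y) / s" by simp
    finally show ?thesis using s0 unfolding s_def[symmetric] by (simp add: field_simps)
  qed
  define B where "B = (\<lambda>a b. A a b - (if a = b then complex_of_real \<mu> else 0))"
  have hB: "herm N B" unfolding herm_def B_def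
  proof (intro ballI)
    fix a b assume a: "a \<in> {1..N}" and b: "b \<in> {1..N}"
    have e: "A a b = cnj (A b a)" using herm a b unfolding herm_def by blast
    show "A a b - (if a = b then complex_of_real \<mu> else 0) = cnj (A b a - (if b = a then complex_of_real \<mu> else 0))"
      unfolding e by simp
  qed
  have qB: "qform N B y = qform N A y - complex_of_real \<mu> * (\<Sum>a\<in>{1..N}. cnj (y a) * y a)" for y
  proof -
    have "qform N B y = (\<Sum>a\<in>{1..N}. (\<Sum>b\<in>{1..N}. cnj (y a) * A a b * y b)
        - (\<Sum>b\<in>{1..N}. cnj (y a) * (if a = b then complex_of_real \<mu> else 0) * y b))"
      unfolding qform_def B_def by (simp add: algebra_simps sum_subtractf)
    also have "\<dots> = (\<Sum>a\<in>{1..N}. (\<Sum>b\<in>{1..N}. cnj (y a) * A a b * y b) - complex_of_real \<mu> * (cnj (y a) * y a))"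
      by (intro sum.cong refl) (simp only: sum_delta_mult, simp add: mult_ac)
    also have "\<dots> = qform N A y - complex_of_real \<mu> * (\<Sum>a\<in>{1..N}. cnj (y a) * y a)"
      unfolding qform_def by (simp add: sum_subtractf sum_distrib_left)
    finally show ?thesis .
  qed
  have ReqB: "Re (qform N B y) = Re (qform N A y) - \<mu> * sqnorm N y" for y
    unfolding qB using Re_cnj_sum[where w=y and N=N] by simp
  have psd: "0 \<le> Re (qform N B y)" for y using ray[of y] unfolding ReqB by simp
  have z: "Re (qform N B x0) = 0" unfolding ReqB x0 \<mu>_def by simp
  have ev: "mv N A x0 a = complex_of_real \<mu> * x0 a" if a: "a \<in> {1..N}" for a
  proof -
    have "mv N B x0 a = 0" by (rule psd_kernel[OF hB psd z a])
    moreover have "mv N B x0 a = mv N A x0 a - complex_of_real \<mu> * x0 a"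
      unfolding mv_def B_def using a by (simp only: left_diff_distrib sum_subtractf sum_delta_mult2)
    ultimately show ?thesis by simp
  qed
  have nz: "\<exists>a\<in>{1..N}. x0 a \<noteq> 0"
  proof (rule ccontr)
    assume "\<not> ?thesis"
    then have "sqnorm N x0 = 0" unfolding sqnorm_def by simp
    with x0 show False by simp
  qed
  have "is_eigvec N A x0 (complex_of_real \<mu>)"
    unfolding is_eigvec_def using nz ev unfolding mv_def by auto
  with ray show ?thesis by blast
qed


definition rank1 :: "nat \<Rightarrow> nat \<Rightarrow> (nat \<Rightarrow> nat \<Rightarrow> complex) \<Rightarrow> real \<Rightarrow> nat \<Rightarrow> nat \<Rightarrow> complex" where
  "rank1 N m W r = (\<lambda>a b. if m \<in> {1..N} then cnj (W m a) * complex_of_real r * W m b else 0)"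

lemma mm_rank1:
  "mmult N (adj W) (mmult N (\<lambda>c d. if c = m \<and> d = m then complex_of_real r else 0) W) = rank1 N m W r"
proof (intro ext)
  fix a b
  have inner: "(\<Sum>d\<in>{1..N}. (if c = m \<and> d = m then complex_of_real r else 0) * W d b)
      = (if c = m \<and> m \<in> {1..N} then complex_of_real r * W m b else 0)" for c
  proof -
    have "(\<Sum>d\<in>{1..N}. (if c = m \<and> d = m then complex_of_real r else 0) * W d b)
      = (\<Sum>d\<in>{1..N}. if d = m then (if c = m then complex_of_real r * W m b else 0) else 0)"
      by (intro sum.cong refl) auto
    also have "\<dots> = (if c = m \<and> m \<in> {1..N} then complex_of_real r * W m b else 0)"
      by (subst sum.delta) auto
    finally show ?thesis .
  qed
  have "(\<Sum>c\<in>{1..N}. cnj (W c a) * (if c = m \<and> m \<in> {1..N} then complex_of_real r * W m b else 0))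
      = (\<Sum>c\<in>{1..N}. if c = m then (if m \<in> {1..N} then cnj (W m a) * complex_of_real r * W m b else 0) else 0)"
    by (intro sum.cong refl) auto
  also have "\<dots> = rank1 N m W r a b" unfolding rank1_def
    by (subst sum.delta) auto
  finally show "mmult N (adj W) (mmult N (\<lambda>c d. if c = m \<and> d = m then complex_of_real r else 0) W) a b = rank1 N m W r a b"
    unfolding mmult_def adj_def inner .
qed

lemma herm_rank1: "herm N (rank1 N m W r)"
  unfolding herm_def rank1_def by (auto simp: mult_ac)

lemma qform_rank1:
  assumes "r \<ge> 0" shows "0 \<le> Re (qform N (rank1 N m W r) x)"
proof (cases "m \<in> {1..N}")
  case True
  define z where "z = (\<Sum>b\<in>{1..N}. W m b * x b)"
  have "qform N (rank1 N m W r) x = complex_of_real r * (cnj z * z)"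
  proof -
    have "complex_of_real r * (cnj z * z) = complex_of_real r * (\<Sum>a\<in>{1..N}. \<Sum>b\<in>{1..N}. cnj (W m a * x a) * (W m b * x b))"
      unfolding z_def cnj_sum sum_product ..
    also have "\<dots> = qform N (rank1 N m W r) x"
      unfolding qform_def rank1_def sum_distrib_left using True
      by (intro sum.cong refl) (simp add: mult_ac)
    finally show ?thesis ..
  qed
  moreover have "Re (complex_of_real r * (cnj z * z)) = r * (cmod z)^2"
    using complex_norm_square[of z] by (metis Re_complex_of_real mult.commute of_real_mult)
  ultimately show ?thesis using assms by simp
next
  case False
  then have "rank1 N m W r = (\<lambda>a b. 0)" unfolding rank1_def by (intro ext) (rule if_not_P[OF False])
  then show ?thesis unfolding qform_def by simp
qed

lemma Qmat_rank1: "Qmat N m = rank1 N m (Vmat N) (sqrt (1 + 1/2 * cos (2 * pi * real m / real N)))"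
  unfolding Qmat_def Cmat_def by (rule mm_rank1)

lemma Qhat_rank1: "Qhat N m = rank1 N m (Vhat N) (sqrt (1 + 1/2 * cos (2 * pi * (real m / real N + 1 / (2 * real N)))))"
  unfolding Qhat_def Chat_def by (rule mm_rank1)

lemma cos_bound: "0 \<le> 1 + 1/2 * cos (x::real)"
  using cos_ge_minus_one[of x] by linarith

lemma Qmat_herm: "herm N (Qmat N m)" unfolding Qmat_rank1 by (rule herm_rank1)
lemma Qhat_herm: "herm N (Qhat N m)" unfolding Qhat_rank1 by (rule herm_rank1)
lemma Qmat_psd: "0 \<le> Re (qform N (Qmat N m) x)" unfolding Qmat_rank1
  by (rule qform_rank1, rule real_sqrt_ge_zero, rule cos_bound)
lemma Qhat_psd: "0 \<le> Re (qform N (Qhat N m) x)" unfolding Qhat_rank1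
  by (rule qform_rank1, rule real_sqrt_ge_zero, rule cos_bound)

lemma qform_sum: "qform N (\<lambda>a b. \<Sum>k\<in>S. F k a b) x = (\<Sum>k\<in>S. qform N (F k) x)"
proof -
  have "qform N (\<lambda>a b. \<Sum>k\<in>S. F k a b) x = (\<Sum>a\<in>{1..N}. \<Sum>b\<in>{1..N}. \<Sum>k\<in>S. cnj (x a) * F k a b * x b)"
    unfolding qform_def by (simp only: sum_distrib_left sum_distrib_right)
  also have "\<dots> = (\<Sum>a\<in>{1..N}. \<Sum>k\<in>S. \<Sum>b\<in>{1..N}. cnj (x a) * F k a b * x b)"
    by (intro sum.cong refl) (rule sum.swap)
  also have "\<dots> = (\<Sum>k\<in>S. qform N (F k) x)" unfolding qform_def by (rule sum.swap)
  finally show ?thesis .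
qed

lemma qform_lin2: "qform N (\<lambda>a b. p * A a b + q * B a b) x = p * qform N A x + q * qform N B x"
proof -
  have "cnj (x a) * (p * A a b + q * B a b) * x b = p * (cnj (x a) * A a b * x b) + q * (cnj (x a) * B a b * x b)" for a b
    by (simp add: algebra_simps)
  then show ?thesis unfolding qform_def by (simp only: sum.distrib sum_distrib_left)
qed

lemma herm_sum: "(\<And>k. k \<in> S \<Longrightarrow> herm N (F k)) \<Longrightarrow> herm N (\<lambda>a b. \<Sum>k\<in>S. F k a b)"
proof -
  assume h: "\<And>k. k \<in> S \<Longrightarrow> herm N (F k)"
  show ?thesis unfolding herm_def cnj_sum
  proof (intro ballI)
    fix a b assume a: "a \<in> {1..N}" and b: "b \<in> {1..N}"
    have "F k a b = cnj (F k b a)" if "k \<in> S" for k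
      using h[OF that] a b unfolding herm_def by blast
    then show "(\<Sum>k\<in>S. F k a b) = (\<Sum>k\<in>S. cnj (F k b a))" by (rule sum.cong[OF refl])
  qed
qed

lemma herm_lin2: "herm N A \<Longrightarrow> herm N B \<Longrightarrow> cnj p = p \<Longrightarrow> cnj q = q \<Longrightarrow> herm N (\<lambda>a b. p * A a b + q * B a b)"
proof -
  assume hA: "herm N A" and hB: "herm N B" and p: "cnj p = p" and q: "cnj q = q"
  show ?thesis unfolding herm_def
  proof (intro ballI)
    fix a b assume a: "a \<in> {1..N}" and b: "b \<in> {1..N}"
    have eA: "A a b = cnj (A b a)" using hA a b unfolding herm_def by blast
    have eB: "B a b = cnj (B b a)" using hB a b unfolding herm_def by blast
    show "p * A a b + q * B a b = cnj (p * A b a + q * B b a)"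
      unfolding eA eB complex_cnj_add complex_cnj_mult p q ..
  qed
qed

lemma Sigma_herm: "herm N (Sigma N K s i)"
  unfolding Sigma_def
  by (intro herm_sum herm_lin2 Qmat_herm Qhat_herm qform_real)

lemma Sigma_qform: "qform N (Sigma N K s i) x = (\<Sum>k\<in>{1..K} - {i}. \<Sum>m\<in>{1..N}. Sterm N m x (s k))"
  unfolding Sigma_def qform_sum qform_lin2 Sterm_def by (simp add: mult.commute)

lemma prod_psd: "herm N A \<Longrightarrow> herm N B \<Longrightarrow> (\<And>y. 0 \<le> Re (qform N A y)) \<Longrightarrow> (\<And>y. 0 \<le> Re (qform N B y))
   \<Longrightarrow> 0 \<le> Re (qform N A y * qform N B x)"
  by (subst qform_Re[of N A], assumption, subst qform_Re[of N B], assumption) (simp del: of_real_Re)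

lemma Sigma_psd: "0 \<le> Re (qform N (Sigma N K s i) x)"
  unfolding Sigma_qform Sterm_def Re_sum
  by (intro sum_nonneg, simp only: plus_complex.sel, intro add_nonneg_nonneg prod_psd Qmat_herm Qhat_herm Qmat_psd Qhat_psd)


theorem mainTheorem1:
  fixes N K i :: nat and N0 P T lam :: real
    and s :: "nat \<Rightarrow> nat \<Rightarrow> complex" and u :: "nat \<Rightarrow> complex"
  assumes "N \<ge> 2" and "K \<ge> 2" and "N0 > 0" and "P > 0" and "T > 0"
    and "i \<in> {1..K}"
    and "is_min_eigval N (Sigma N K s i) lam"
    and "is_eigvec N (Sigma N K s i) u (complex_of_real lam)"
    and "sqnorm N u = 1"
  shows "(\<forall>x. sqnorm N x = real N \<longrightarrow>
            SINR N K N0 P T (s(i := x)) i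
              \<le> SINR N K N0 P T (s(i := (\<lambda>a. complex_of_real (sqrt (real N)) * u a))) i)
       \<and> SINR N K N0 P T (s(i := (\<lambda>a. complex_of_real (sqrt (real N)) * u a))) i
           = (lam / (6 * real N) + N0 / (2 * P * T)) powr (-1/2)"
proof -
  define S where "S = Sigma N K s i"
  define c0 where "c0 = N0 / (2 * P * T)"
  have c0: "c0 > 0" using assms(3-5) unfolding c0_def by simp
  have N1: "N \<ge> 1" using assms(1) by simp
  have Npos: "real N > 0" using assms(1) by simp
  have sinr: "SINR N K N0 P T (s(i := x)) i = (Re (qform N S x) / (6 * (real N)^2) + c0) powr (-1/2)" for x
  proof -
    have "(\<Sum>k\<in>{1..K} - {i}. \<Sum>m\<in>{1..N}. Sterm N m ((s(i := x)) i) ((s(i := x)) k))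
        = (\<Sum>k\<in>{1..K} - {i}. \<Sum>m\<in>{1..N}. Sterm N m x (s k))"
      by (intro sum.cong refl) auto
    then show ?thesis unfolding SINR_def S_def Sigma_qform c0_def by simp
  qed
  obtain \<mu> x0 where ev0: "is_eigvec N S x0 (complex_of_real \<mu>)"
    and ray: "\<forall>y. \<mu> * sqnorm N y \<le> Re (qform N S y)"
    using rayleigh[OF Sigma_herm N1] unfolding S_def by blast
  have lm: "lam \<le> \<mu>" using assms(7) ev0 unfolding is_min_eigval_def is_eigval_def S_def
    by (metis Re_complex_of_real)
  have sqn: "0 \<le> sqnorm N y" for y unfolding sqnorm_def by (simp add: sum_nonneg)
  have ray2: "lam * sqnorm N y \<le> Re (qform N S y)" for y
    using order_trans[OF mult_right_mono[OF lm sqn[of y]] ray[rule_format, of y]] .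
  have qu: "qform N S u = (\<Sum>a\<in>{1..N}. complex_of_real lam * (cnj (u a) * u a))"
    unfolding qform_mv
  proof (intro sum.cong refl)
    fix a assume a: "a \<in> {1..N}"
    have "mv N S u a = complex_of_real lam * u a"
      using assms(8) a unfolding is_eigvec_def mv_def S_def by blast
    then show "cnj (u a) * mv N S u a = complex_of_real lam * (cnj (u a) * u a)" by simp
  qed
  have Rqu: "Re (qform N S u) = lam"
    unfolding qu sum_distrib_left[symmetric] using Re_cnj_sum[where w=u and N=N] assms(9) by simp
  have lam0: "0 \<le> lam" using Sigma_psd[of N K s i u] Rqu unfolding S_def by simp
  define v where "v = (\<lambda>a. complex_of_real (sqrt (real N)) * u a)"
  have qv: "Re (qform N S v) = real N * lam"
  proof -
    have "cnj (complex_of_real (sqrt (real N))) * complex_of_real (sqrt (real N))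
        = complex_of_real (sqrt (real N) * sqrt (real N))"
      by (simp only: complex_cnj_complex_of_real of_real_mult)
    also have "sqrt (real N) * sqrt (real N) = real N" by simp
    finally have "qform N S v = complex_of_real (real N) * qform N S u"
      unfolding v_def qform_scale by simp
    then show ?thesis using Rqu by simp
  qed
  have base_v: "Re (qform N S v) / (6 * (real N)^2) + c0 = lam / (6 * real N) + c0"
    unfolding qv using Npos by (simp add: power2_eq_square)
  have bpos: "lam / (6 * real N) + c0 > 0" using lam0 Npos c0 by (simp add: add_nonneg_pos)
  show ?thesis
  proof (intro conjI allI impI)
    fix x assume x: "sqnorm N x = real N"
    have "real N * lam \<le> Re (qform N S x)" using ray2[of x] x by (simp add: mult.commute)
    then have "Re (qform N S v) / (6 * (real N)^2) \<le> Re (qform N S x) / (6 * (real N)^2)"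
      unfolding qv by (rule divide_right_mono) simp
    then have le: "lam / (6 * real N) + c0 \<le> Re (qform N S x) / (6 * (real N)^2) + c0"
      using base_v by linarith
    show "SINR N K N0 P T (s(i := x)) i \<le> SINR N K N0 P T (s(i := (\<lambda>a. complex_of_real (sqrt (real N)) * u a))) i"
      unfolding v_def[symmetric] sinr base_v
      by (rule powr_mono2'[OF _ bpos le]) simp
  next
    show "SINR N K N0 P T (s(i := (\<lambda>a. complex_of_real (sqrt (real N)) * u a))) i
           = (lam / (6 * real N) + N0 / (2 * P * T)) powr (-1/2)"
      unfolding v_def[symmetric] sinr base_v unfolding c0_def ..
  qed
qed

end
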